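(* Let $f$ be a function on $X$ invariant under the stabilizer $G_b$ of $b=(0,0,1)$ in $G$, whose Lorentzian Fourier-Helgason transforms $\tilde f_{\pm,\nu}(\xi)$ are defined for all $\xi\in C^+$. Then for all $\xi\in C^+$ with $[\xi\cdot b]\ne0$, $$\tilde f_{\pm,\nu}(\xi)=|[\xi\cdot b]|^{-\frac12-i\nu}\Big(Y([\xi\cdot b])\,\tilde F_\pm(\nu)+Y(-[\xi\cdot b])\,\tilde F'_\pm(\nu)\Big),$$ where $\tilde F_\pm(\nu)=\tilde f_{\pm,\nu}((1,0,-1))$ and $\tilde F'_\pm(\nu)=\tilde f_{\pm,\nu}((1,0,1))$.
   Context: $[x\cdot x']=x_0x'_0-x_1x'_1-x_2x'_2$, $x^2=[x\cdot x]$; $X=\{x\in\mathbb R^3:x^2=-1\}$; ${\rm d}\sigma(x)=\frac{{\rm d}x_1{\rm d}x_2}{2|x_0|}$; $G=SO_0(1,2)$; $C^+=\{\xi\in\mathbb R^3\setminus\{0\}:\xi^2=0,\xi_0>0\}$; $Y$ is the Heaviside function. For real $t\neq0$, $t_\pm^s=Y(t)|t|^s+e^{\pm i\pi s}Y(-t)|t|^s$. Lorentzian FH transforms: $\tilde f_{\pm,\nu}(\xi)=\int_X([x\cdot\xi])_\pm^{-\frac12-i\nu}f(x)\,{\rm d}\sigma(x)$, $\xi\in C^+$, $\nu\in\mathbb R$. *)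

theory Defs
  imports "HOL-Analysis.Analysis"
begin

type_synonym pt3 = "real \<times> real \<times> real"

definition lbr :: "pt3 \<Rightarrow> pt3 \<Rightarrow> real" where
  "lbr x y = (case x of (x0, x1, x2) \<Rightarrow> case y of (y0, y1, y2) \<Rightarrow>
      x0 * y0 - x1 * y1 - x2 * y2)"

definition hypX :: "pt3 set" where
  "hypX = {x. lbr x x = -1}"

definition coneC :: "pt3 set" where
  "coneC = {\<xi>. \<xi> \<noteq> 0 \<and> lbr \<xi> \<xi> = 0 \<and> fst \<xi> > 0}"

definition det3 :: "(pt3 \<Rightarrow> pt3) \<Rightarrow> real" where
  "det3 g = (case g (1,0,0) of (a0,a1,a2) \<Rightarrow> case g (0,1,0) of (b0,b1,b2) \<Rightarrow>
     case g (0,0,1) of (c0,c1,c2) \<Rightarrow>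
       a0 * (b1 * c2 - c1 * b2) - b0 * (a1 * c2 - c1 * a2) + c0 * (a1 * b2 - b1 * a2))"

text \<open>G = SO_0(1,2): linear maps preserving the form, det 1, time orientation preserving.\<close>
definition SO012 :: "(pt3 \<Rightarrow> pt3) set" where
  "SO012 = {g. linear g \<and> (\<forall>x y. lbr (g x) (g y) = lbr x y) \<and> det3 g = 1
               \<and> fst (g (1,0,0)) > 0}"

definition bpt :: pt3 where "bpt = (0, 0, 1)"

definition stabG :: "pt3 \<Rightarrow> (pt3 \<Rightarrow> pt3) set" where
  "stabG b = {g \<in> SO012. g b = b}"

text \<open>t_{\<pm>}^s, with sign parameter sg = 1 for +, sg = -1 for -. (Value at t = 0
  is irrelevant: a null set; set to 0.)\<close>
definition powpm :: "real \<Rightarrow> real \<Rightarrow> complex \<Rightarrow> complex" where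
  "powpm sg t s = (if t \<ge> 0 then complex_of_real \<bar>t\<bar> powr s
                   else exp (complex_of_real sg * \<i> * complex_of_real pi * s) * complex_of_real \<bar>t\<bar> powr s)"

definition heav :: "real \<Rightarrow> real" where
  "heav t = (if t > 0 then 1 else 0)"

text \<open>Chart of X: for x1^2+x2^2>1 and e = \<pm>1, the point (e sqrt(x1^2+x2^2-1), x1, x2).
  The two charts cover X up to the null circle x0 = 0, and d\<sigma> = dx1 dx2 / (2|x0|).\<close>
definition chartX :: "real \<Rightarrow> real \<times> real \<Rightarrow> pt3" where
  "chartX e p = (e * sqrt ((fst p)\<^sup>2 + (snd p)\<^sup>2 - 1), fst p, snd p)"

definition chartR :: "(real \<times> real) set" where
  "chartR = {p. (fst p)\<^sup>2 + (snd p)\<^sup>2 > 1}"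

definition FH_integrand :: "real \<Rightarrow> (pt3 \<Rightarrow> complex) \<Rightarrow> real \<Rightarrow> pt3 \<Rightarrow> real \<Rightarrow> real \<times> real \<Rightarrow> complex" where
  "FH_integrand sg f \<nu> \<xi> e p =
     powpm sg (lbr (chartX e p) \<xi>) (- 1/2 - \<i> * complex_of_real \<nu>) * f (chartX e p)
       / complex_of_real (2 * sqrt ((fst p)\<^sup>2 + (snd p)\<^sup>2 - 1))"

definition FH_defined :: "real \<Rightarrow> (pt3 \<Rightarrow> complex) \<Rightarrow> real \<Rightarrow> pt3 \<Rightarrow> bool" where
  "FH_defined sg f \<nu> \<xi> \<longleftrightarrow>
     (\<forall>e\<in>{1, -1}. set_integrable lborel chartR (FH_integrand sg f \<nu> \<xi> e))"

text \<open>Lorentzian Fourier-Helgason transform \<integral>_X ([x.\<xi>])_\<pm>^{-1/2-i\<nu>} f(x) d\<sigma>(x).\<close>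
definition FH :: "real \<Rightarrow> (pt3 \<Rightarrow> complex) \<Rightarrow> real \<Rightarrow> pt3 \<Rightarrow> complex" where
  "FH sg f \<nu> \<xi> = (\<Sum>e\<in>{1, -1::real}. set_lebesgue_integral lborel chartR (FH_integrand sg f \<nu> \<xi> e))"

end

theory Submission
  imports Defs
begin

definition Psi :: "real \<Rightarrow> real \<Rightarrow> pt3" where
  "Psi t a = ((a + (t\<^sup>2 - 1)/a)/2, (a - (t\<^sup>2 - 1)/a)/2, t)"

definition gch :: "real \<Rightarrow> real \<Rightarrow> real \<Rightarrow> real" where
  "gch c e x = x + e * sqrt (x\<^sup>2 + c)"

lemma gch_prod:
  assumes e: "e \<in> {1,-1}" and x: "x\<^sup>2 + c > 0"
  shows "gch c e x * (x - e * sqrt (x\<^sup>2 + c)) = - c"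
proof -
  have "e\<^sup>2 = 1" using e by auto
  moreover have "(sqrt (x\<^sup>2 + c))\<^sup>2 = x\<^sup>2 + c" using x by simp
  ultimately show ?thesis unfolding gch_def by (simp add: algebra_simps power2_eq_square)
qed

lemma gch_nz:
  assumes e: "e \<in> {1,-1}" and x: "x\<^sup>2 + c > 0" and c: "c \<noteq> 0"
  shows "gch c e x \<noteq> 0"
  using gch_prod[OF e x] c by auto

lemma gch_inv:
  assumes e: "e \<in> {1,-1}" and x: "x\<^sup>2 + c > 0" and c: "c \<noteq> 0"
  shows "c / gch c e x = e * sqrt (x\<^sup>2 + c) - x"
  using gch_prod[OF e x] gch_nz[OF e x c] by (simp add: field_simps)

lemma Psi_gch:
  assumes e: "e \<in> {1,-1}" and x: "x\<^sup>2 + t\<^sup>2 - 1 > 0" and c: "t\<^sup>2 - 1 \<noteq> 0"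
  shows "Psi t (gch (t\<^sup>2 - 1) e x) = chartX e (x, t)"
proof -
  have x': "x\<^sup>2 + (t\<^sup>2 - 1) > 0" using x by simp
  have i: "(t\<^sup>2 - 1) / gch (t\<^sup>2 - 1) e x = e * sqrt (x\<^sup>2 + (t\<^sup>2 - 1)) - x"
    by (rule gch_inv[OF e x' c])
  show ?thesis unfolding Psi_def chartX_def i by (simp add: gch_def algebra_simps)
qed

lemma gch_deriv:
  assumes x: "x\<^sup>2 + c > 0"
  shows "(gch c e has_field_derivative (1 + e * x / sqrt (x\<^sup>2 + c))) (at x within S)"
  unfolding gch_def[abs_def] using x
  by (auto intro!: derivative_eq_intros simp: field_simps)

lemma gch_recover:
  assumes e: "e \<in> {1,-1}" and x: "x\<^sup>2 + c > 0" and c: "c \<noteq> 0"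
  shows "(gch c e x - c / gch c e x) / 2 = x"
  using gch_inv[OF e x c] by (simp add: gch_def)

lemma gch_inj:
  assumes e: "e \<in> {1,-1}" and c: "c \<noteq> 0"
  shows "inj_on (gch c e) {x. x\<^sup>2 + c > 0}"
proof (rule inj_onI)
  fix x y assume "x \<in> {x. x\<^sup>2 + c > 0}" "y \<in> {x. x\<^sup>2 + c > 0}" "gch c e x = gch c e y"
  then have x: "x\<^sup>2 + c > 0" and y: "y\<^sup>2 + c > 0" and g: "gch c e x = gch c e y" by auto
  have "x = (gch c e x - c / gch c e x) / 2" using gch_recover[OF e x c] by simp
  also have "\<dots> = (gch c e y - c / gch c e y) / 2" by (simp only: g)
  also have "\<dots> = y" using gch_recover[OF e y c] by simp
  finally show "x = y" .
qed

lemma gch_abs_deriv: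
  assumes e: "e \<in> {1,-1}" and x: "x\<^sup>2 + c > 0"
  shows "\<bar>1 + e * x / sqrt (x\<^sup>2 + c)\<bar> = \<bar>gch c e x\<bar> / sqrt (x\<^sup>2 + c)"
proof -
  have sp: "sqrt (x\<^sup>2 + c) > 0" using x by simp
  have "1 + e * x / sqrt (x\<^sup>2 + c) = (sqrt (x\<^sup>2 + c) + e * x) / sqrt (x\<^sup>2 + c)"
    using sp by (simp add: add_divide_distrib)
  moreover have "\<bar>sqrt (x\<^sup>2 + c) + e * x\<bar> = \<bar>gch c e x\<bar>"
  proof (cases "e = 1")
    case True then show ?thesis by (simp add: gch_def add.commute)
  next
    case False then have "e = -1" using e by auto
    then show ?thesis using abs_minus_commute[of "sqrt (x\<^sup>2 + c)" x] by (simp add: gch_def)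
  qed
  ultimately show ?thesis using sp by simp
qed

lemma cx_aux: "complex_of_real A * (h / complex_of_real B) = complex_of_real (A / B) * h"
  by (simp add: of_real_divide)

lemma cx_aux2: "complex_of_real (1 / B) * h = h / complex_of_real B"
  by (simp add: of_real_divide)

lemma slice_cov:
  fixes H :: "pt3 \<Rightarrow> complex"
  assumes e: "e \<in> {1,-1}" and c: "t\<^sup>2 - 1 \<noteq> 0"
    and int: "(\<lambda>x. H (chartX e (x,t)) / complex_of_real (2 * sqrt (x\<^sup>2 + t\<^sup>2 - 1)))
                 absolutely_integrable_on {x. x\<^sup>2 + (t\<^sup>2 - 1) > 0}"
  shows "(\<lambda>a. H (Psi t a) / complex_of_real (2 * \<bar>a\<bar>)) absolutely_integrable_on
            (gch (t\<^sup>2 - 1) e ` {x. x\<^sup>2 + (t\<^sup>2 - 1) > 0}) \<and>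
         integral (gch (t\<^sup>2 - 1) e ` {x. x\<^sup>2 + (t\<^sup>2 - 1) > 0}) (\<lambda>a. H (Psi t a) / complex_of_real (2 * \<bar>a\<bar>))
         = integral {x. x\<^sup>2 + (t\<^sup>2 - 1) > 0} (\<lambda>x. H (chartX e (x,t)) / complex_of_real (2 * sqrt (x\<^sup>2 + t\<^sup>2 - 1)))"
proof -
  let ?c = "t\<^sup>2 - 1"
  let ?T = "{x. x\<^sup>2 + ?c > 0}"
  let ?F = "\<lambda>a. H (Psi t a) / complex_of_real (2 * \<bar>a\<bar>)"
  let ?phi = "\<lambda>x. H (chartX e (x,t)) / complex_of_real (2 * sqrt (x\<^sup>2 + t\<^sup>2 - 1))"
  have T: "?T \<in> sets lebesgue"
  proof (rule sets_completionI_sets)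
    show "?T \<in> sets lborel" by simp
  qed
  have pw: "\<bar>1 + e * x / sqrt (x\<^sup>2 + ?c)\<bar> *\<^sub>R ?F (gch ?c e x) = ?phi x" if x: "x \<in> ?T" for x
  proof -
    have x': "x\<^sup>2 + ?c > 0" using x by simp
    have gnz: "gch ?c e x \<noteq> 0" by (rule gch_nz[OF e x' c])
    have sp: "sqrt (x\<^sup>2 + ?c) > 0" using x' by simp
    have ps: "Psi t (gch ?c e x) = chartX e (x, t)" using Psi_gch[OF e _ c, of x] x' by simp
    have r: "(\<bar>gch ?c e x\<bar> / sqrt (x\<^sup>2 + ?c)) / (2 * \<bar>gch ?c e x\<bar>) = 1 / (2 * sqrt (x\<^sup>2 + ?c))"
      using gnz sp by (simp add: divide_simps)
    have "\<bar>1 + e * x / sqrt (x\<^sup>2 + ?c)\<bar> *\<^sub>R ?F (gch ?c e x)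
        = complex_of_real ((\<bar>gch ?c e x\<bar> / sqrt (x\<^sup>2 + ?c)) / (2 * \<bar>gch ?c e x\<bar>)) * H (chartX e (x, t))"
      unfolding gch_abs_deriv[OF e x'] ps scaleR_conv_of_real by (rule cx_aux)
    also have "\<dots> = ?phi x" unfolding r by (simp add: cx_aux2)
    finally show ?thesis .
  qed
  have "((\<lambda>x. \<bar>1 + e * x / sqrt (x\<^sup>2 + ?c)\<bar> *\<^sub>R ?F (gch ?c e x)) absolutely_integrable_on ?T \<and>
        integral ?T (\<lambda>x. \<bar>1 + e * x / sqrt (x\<^sup>2 + ?c)\<bar> *\<^sub>R ?F (gch ?c e x)) = integral ?T ?phi)
     \<longleftrightarrow> (?F absolutely_integrable_on (gch ?c e ` ?T) \<and> integral (gch ?c e ` ?T) ?F = integral ?T ?phi)"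
    by (rule has_absolute_integral_change_of_variables_real[OF T gch_deriv gch_inj[OF e c]]) simp
  moreover have "(\<lambda>x. \<bar>1 + e * x / sqrt (x\<^sup>2 + ?c)\<bar> *\<^sub>R ?F (gch ?c e x)) absolutely_integrable_on ?T"
    using int by (subst set_integrable_cong[OF refl refl pw]) auto
  moreover have "integral ?T (\<lambda>x. \<bar>1 + e * x / sqrt (x\<^sup>2 + ?c)\<bar> *\<^sub>R ?F (gch ?c e x)) = integral ?T ?phi"
    by (rule integral_cong) (rule pw)
  ultimately show ?thesis by blast
qed

lemma gch_sign:
  assumes e: "e \<in> {1,-1}" and x: "x\<^sup>2 + c > 0" and c: "c \<noteq> 0"
  shows "gch c e x + c / gch c e x = 2 * e * sqrt (x\<^sup>2 + c)"
  using gch_inv[OF e x c] by (simp add: gch_def)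

lemma gch_cover:
  assumes a: "a \<noteq> 0" and b: "a + c / a \<noteq> 0"
  shows "a \<in> gch c 1 ` {x. x\<^sup>2 + c > 0} \<union> gch c (-1) ` {x. x\<^sup>2 + c > 0}"
proof -
  define x where "x = (a - c / a) / 2"
  have xx: "x\<^sup>2 + c = ((a + c / a) / 2)\<^sup>2"
    using a unfolding x_def by (simp add: power2_eq_square field_simps)
  have pos: "x\<^sup>2 + c > 0" unfolding xx using b by simp
  have sq: "sqrt (x\<^sup>2 + c) = \<bar>a + c / a\<bar> / 2" unfolding xx by (simp add: real_sqrt_abs)
  show ?thesis
  proof (cases "a + c / a > 0")
    case True
    have "gch c 1 x = a" unfolding gch_def sq unfolding x_def using True by (simp add: field_simps)
    then show ?thesis using pos by blast
  next
    case False
    have "gch c (-1) x = a" unfolding gch_def sq unfolding x_def using False by (simp add: field_simps)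
    then show ?thesis using pos by blast
  qed
qed

lemma finite_exc: "finite {a::real. a = 0 \<or> a + c / a = 0}"
proof -
  have "{a::real. a = 0 \<or> a + c / a = 0} \<subseteq> {0, sqrt (-c), - sqrt (-c)}"
  proof
    fix a :: real assume "a \<in> {a. a = 0 \<or> a + c / a = 0}"
    then consider "a = 0" | "a \<noteq> 0" "a + c / a = 0" by auto
    then show "a \<in> {0, sqrt (-c), - sqrt (-c)}"
    proof cases
      case 2
      then have "a\<^sup>2 = - c" by (simp add: field_simps power2_eq_square)
      then have "\<bar>a\<bar> = sqrt (-c)" by (metis real_sqrt_abs)
      then show ?thesis by auto
    qed simp
  qed
  then show ?thesis by (rule finite_subset) simp
qed

lemma sum_two_pm: "(\<Sum>e\<in>{1,-1::real}. g e) = g 1 + g (-1)"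
  by simp

lemma slice_total:
  fixes H :: "pt3 \<Rightarrow> complex"
  assumes c: "t\<^sup>2 - 1 \<noteq> 0"
    and int: "\<And>e. e \<in> {1,-1} \<Longrightarrow> (\<lambda>x. H (chartX e (x,t)) / complex_of_real (2 * sqrt (x\<^sup>2 + t\<^sup>2 - 1)))
                 absolutely_integrable_on {x. x\<^sup>2 + (t\<^sup>2 - 1) > 0}"
  shows "(\<lambda>a. H (Psi t a) / complex_of_real (2 * \<bar>a\<bar>)) absolutely_integrable_on UNIV \<and>
         integral UNIV (\<lambda>a. H (Psi t a) / complex_of_real (2 * \<bar>a\<bar>))
         = (\<Sum>e\<in>{1,-1::real}. integral {x. x\<^sup>2 + (t\<^sup>2 - 1) > 0} (\<lambda>x. H (chartX e (x,t)) / complex_of_real (2 * sqrt (x\<^sup>2 + t\<^sup>2 - 1))))"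
proof -
  let ?c = "t\<^sup>2 - 1"
  let ?T = "{x. x\<^sup>2 + ?c > 0}"
  let ?F = "\<lambda>a. H (Psi t a) / complex_of_real (2 * \<bar>a\<bar>)"
  let ?phi = "\<lambda>e x. H (chartX e (x,t)) / complex_of_real (2 * sqrt (x\<^sup>2 + t\<^sup>2 - 1))"
  let ?A = "\<lambda>e. gch ?c e ` ?T"
  have e1: "(1::real) \<in> {1,-1}" and e2: "(-1::real) \<in> {1,-1}" by auto
  note S1 = slice_cov[OF e1 c int[OF e1]] and S2 = slice_cov[OF e2 c int[OF e2]]
  have disj: "?A 1 \<inter> ?A (-1) = {}"
  proof (rule ccontr)
    assume "?A 1 \<inter> ?A (-1) \<noteq> {}"
    then obtain x y where x: "x \<in> ?T" and y: "y \<in> ?T" and eq: "gch ?c 1 x = gch ?c (-1) y" by blast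
    have l1: "gch ?c 1 x + ?c / gch ?c 1 x = 2 * sqrt (x\<^sup>2 + ?c)"
      using gch_sign[OF e1 _ c, of x] x by simp
    have l2: "gch ?c (-1) y + ?c / gch ?c (-1) y = - 2 * sqrt (y\<^sup>2 + ?c)"
      using gch_sign[OF e2 _ c, of y] y by simp
    have l3: "gch ?c 1 x + ?c / gch ?c 1 x = - 2 * sqrt (y\<^sup>2 + ?c)"
      using l2 unfolding eq .
    have "sqrt (x\<^sup>2 + ?c) > 0" "sqrt (y\<^sup>2 + ?c) > 0" using x y by auto
    then show False using l1 l3 by linarith
  qed
  have intU: "?F absolutely_integrable_on (?A 1 \<union> ?A (-1))"
    using S1 S2 by (intro absolutely_integrable_Un) auto
  have hasU: "(?F has_integral (integral ?T (?phi 1) + integral ?T (?phi (-1)))) (?A 1 \<union> ?A (-1))"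
  proof (rule has_integral_Un)
    show "(?F has_integral integral ?T (?phi 1)) (?A 1)"
    proof -
      have "?F integrable_on ?A 1" using S1 set_lebesgue_integral_eq_integral(1) by blast
      then have "(?F has_integral integral (?A 1) ?F) (?A 1)" by (rule integrable_integral)
      then show ?thesis using S1 by simp
    qed
    show "(?F has_integral integral ?T (?phi (-1))) (?A (-1))"
    proof -
      have "?F integrable_on ?A (-1)" using S2 set_lebesgue_integral_eq_integral(1) by blast
      then have "(?F has_integral integral (?A (-1)) ?F) (?A (-1))" by (rule integrable_integral)
      then show ?thesis using S2 by simp
    qed
  qed (use disj in simp)
  have neg: "negligible {x \<in> UNIV - (?A 1 \<union> ?A (-1)). ?F x \<noteq> 0}"
  proof (rule negligible_subset)
    show "negligible {a::real. a = 0 \<or> a + ?c / a = 0}" using finite_exc by (rule negligible_finite)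
    show "{x \<in> UNIV - (?A 1 \<union> ?A (-1)). ?F x \<noteq> 0} \<subseteq> {a. a = 0 \<or> a + ?c / a = 0}"
    proof
      fix a assume a: "a \<in> {x \<in> UNIV - (?A 1 \<union> ?A (-1)). ?F x \<noteq> 0}"
      show "a \<in> {a. a = 0 \<or> a + ?c / a = 0}"
      proof (rule ccontr)
        assume "a \<notin> {a. a = 0 \<or> a + ?c / a = 0}"
        then have "a \<noteq> 0" "a + ?c / a \<noteq> 0" by auto
        from gch_cover[OF this] a show False by blast
      qed
    qed
  qed
  have "?F absolutely_integrable_on UNIV \<longleftrightarrow> ?F absolutely_integrable_on (?A 1 \<union> ?A (-1))"
    by (rule absolutely_integrable_spike_set_eq[OF neg]) simp
  with intU have i1: "?F absolutely_integrable_on UNIV" by simp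
  have "(?F has_integral (integral ?T (?phi 1) + integral ?T (?phi (-1)))) UNIV \<longleftrightarrow>
        (?F has_integral (integral ?T (?phi 1) + integral ?T (?phi (-1)))) (?A 1 \<union> ?A (-1))"
    by (rule has_integral_spike_set_eq[OF neg]) simp
  with hasU have i2: "(?F has_integral (integral ?T (?phi 1) + integral ?T (?phi (-1)))) UNIV" by simp
  have s2: "(\<Sum>e\<in>{1,-1::real}. integral ?T (?phi e)) = integral ?T (?phi 1) + integral ?T (?phi (-1))"
    by (simp only: sum_two_pm)
  have "integral UNIV ?F = integral ?T (?phi 1) + integral ?T (?phi (-1))"
    by (rule integral_unique[OF i2])
  then show ?thesis using i1 s2 by simp
qed

definition boost :: "real \<Rightarrow> pt3 \<Rightarrow> pt3" where
  "boost l x = (((l + 1/l)/2) * fst x + ((l - 1/l)/2) * fst (snd x),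
                ((l - 1/l)/2) * fst x + ((l + 1/l)/2) * fst (snd x), snd (snd x))"

lemma boost_linear: "linear (boost l)"
  by (rule linearI) (auto simp: boost_def field_simps)

lemma boost_lbr:
  assumes l: "l > 0"
  shows "lbr (boost l x) (boost l y) = lbr x y"
proof -
  obtain x0 x1 x2 where x: "x = (x0, x1, x2)" by (cases x) auto
  obtain y0 y1 y2 where y: "y = (y0, y1, y2)" by (cases y) auto
  show ?thesis unfolding x y boost_def lbr_def using l by (simp add: field_simps)
qed

lemma boost_stab:
  assumes l: "l > 0"
  shows "boost l \<in> stabG bpt"
proof -
  have d: "det3 (boost l) = 1"
    unfolding det3_def boost_def using l by (simp add: field_simps)
  have f: "fst (boost l (1,0,0)) > 0"
    unfolding boost_def using l by (simp add: field_simps add_pos_pos)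
  have b: "boost l bpt = bpt" unfolding boost_def bpt_def by simp
  show ?thesis unfolding stabG_def SO012_def using boost_linear boost_lbr[OF l] d f b by auto
qed

lemma boost_Psi:
  assumes l: "l > 0" and a: "a \<noteq> 0"
  shows "boost l (Psi t a) = Psi t (l * a)"
  unfolding boost_def Psi_def using l a by (simp add: field_simps)

lemma Psi_hyp:
  assumes a: "a \<noteq> 0"
  shows "Psi t a \<in> hypX"
  unfolding hypX_def lbr_def Psi_def using a by (simp add: field_simps power2_eq_square)

lemma powpm_hom:
  assumes a: "a > 0"
  shows "powpm sg (a * u) z = complex_of_real a powr z * powpm sg u z"
proof -
  have abs: "\<bar>a * u\<bar> = a * \<bar>u\<bar>" using a by (simp add: abs_mult)
  have pw: "complex_of_real (a * \<bar>u\<bar>) powr z = complex_of_real a powr z * complex_of_real \<bar>u\<bar> powr z"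
    using a by (subst of_real_mult) (rule powr_times_real, auto)
  have sg: "(a * u \<ge> 0) = (u \<ge> 0)" using a by (simp add: zero_le_mult_iff)
  show ?thesis unfolding powpm_def abs sg pw by (simp add: mult_ac)
qed

lemma cone_facts:
  assumes xi: "\<xi> \<in> coneC" and nz: "snd (snd \<xi>) \<noteq> 0"
  shows "fst \<xi> - fst (snd \<xi>) > 0"
    and "(fst \<xi>)\<^sup>2 - (fst (snd \<xi>))\<^sup>2 = (snd (snd \<xi>))\<^sup>2"
proof -
  obtain p0 p1 p2 where x: "\<xi> = (p0, p1, p2)" by (cases \<xi>) auto
  have e: "p0 * p0 - p1 * p1 - p2 * p2 = 0" and p0: "p0 > 0" using xi unfolding x coneC_def lbr_def by auto
  have p2: "p2 \<noteq> 0" using nz x by simp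
  have "p2 * p2 > 0" using p2 not_real_square_gt_zero by blast
  then have "p1 * p1 < p0 * p0" using e by linarith
  then have "\<bar>p1\<bar> < p0" using p0 by (metis abs_mult_self_eq abs_of_pos mult_strict_mono' abs_ge_zero less_le_not_le linorder_not_le mult_mono)
  then show "fst \<xi> - fst (snd \<xi>) > 0" using x by simp
  show "(fst \<xi>)\<^sup>2 - (fst (snd \<xi>))\<^sup>2 = (snd (snd \<xi>))\<^sup>2" using e x by (simp add: power2_eq_square)
qed

lemma lbr_Psi_scale:
  assumes xi: "\<xi> \<in> coneC" and nz: "snd (snd \<xi>) \<noteq> 0" and a: "a \<noteq> 0"
  defines "l \<equiv> (fst \<xi> - fst (snd \<xi>)) / \<bar>snd (snd \<xi>)\<bar>"
  shows "lbr (Psi t a) \<xi> = \<bar>snd (snd \<xi>)\<bar> * lbr (Psi t (l * a)) (1, 0, sgn (snd (snd \<xi>)))"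
proof -
  obtain p0 p1 p2 where x: "\<xi> = (p0, p1, p2)" by (cases \<xi>) auto
  have d: "p0 - p1 > 0" and sq: "p0\<^sup>2 - p1\<^sup>2 = p2\<^sup>2" using cone_facts[OF xi nz] x by auto
  have p2: "p2 \<noteq> 0" using nz x by simp
  let ?q = "\<bar>p2\<bar>"
  have lq: "?q * l = p0 - p1" unfolding l_def x using p2 by simp
  have l0: "l > 0" unfolding l_def x using d p2 by simp
  have ql: "?q / l = p0 + p1"
  proof -
    have "?q / l = ?q * ?q / (p0 - p1)" unfolding l_def x using p2 d by (simp add: field_simps)
    also have "?q * ?q = (p0 - p1) * (p0 + p1)" using sq by (simp add: power2_eq_square algebra_simps abs_mult_self_eq)
    finally show ?thesis using d by simp
  qed
  have qs: "?q * sgn p2 = p2" by (simp add: abs_mult_sgn)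
  have "\<bar>p2\<bar> * lbr (Psi t (l * a)) (1, 0, sgn p2)
        = (?q * l) * a / 2 + (?q / l) * ((t\<^sup>2 - 1) / a) / 2 - t * (?q * sgn p2)"
    unfolding Psi_def lbr_def using l0 a by (simp add: field_simps)
  also have "\<dots> = (p0 - p1) * a / 2 + (p0 + p1) * ((t\<^sup>2 - 1) / a) / 2 - t * p2"
    unfolding lq ql qs ..
  also have "\<dots> = lbr (Psi t a) (p0, p1, p2)"
    unfolding Psi_def lbr_def by (simp add: algebra_simps add_divide_distrib diff_divide_distrib)
  finally show ?thesis unfolding x by simp
qed

lemma scale_int:
  fixes F :: "real \<Rightarrow> complex"
  assumes F: "F absolutely_integrable_on UNIV" and l: "l > 0"
  shows "((\<lambda>a. l *\<^sub>R F (l * a)) has_integral integral UNIV F) UNIV"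
proof -
  have der: "((\<lambda>a. l * a) has_field_derivative l) (at x within UNIV)" for x
    by (auto intro!: derivative_eq_intros)
  have inj: "inj_on (\<lambda>a. l * a) UNIV" using l by (auto intro: inj_onI)
  have im: "(\<lambda>a. l * a) ` UNIV = UNIV"
  proof -
    have "x = l * (x / l)" for x using l by simp
    then show ?thesis by blast
  qed
  have "(\<lambda>x. \<bar>l\<bar> *\<^sub>R F (l * x)) absolutely_integrable_on UNIV \<and>
        integral UNIV (\<lambda>x. \<bar>l\<bar> *\<^sub>R F (l * x)) = integral UNIV F"
    using has_absolute_integral_change_of_variables_real[of UNIV "\<lambda>a. l * a" "\<lambda>_. l" F "integral UNIV F"]
      der inj F unfolding im by simp
  then have a: "(\<lambda>x. l *\<^sub>R F (l * x)) absolutely_integrable_on UNIV"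
    and b: "integral UNIV (\<lambda>x. l *\<^sub>R F (l * x)) = integral UNIV F" using l by auto
  have "(\<lambda>x. l *\<^sub>R F (l * x)) integrable_on UNIV" using a set_lebesgue_integral_eq_integral(1) by blast
  then show ?thesis using b integrable_integral by metis
qed

definition hfun :: "real \<Rightarrow> (pt3 \<Rightarrow> complex) \<Rightarrow> real \<Rightarrow> pt3 \<Rightarrow> pt3 \<Rightarrow> complex" where
  "hfun sg f \<nu> \<xi> x = powpm sg (lbr x \<xi>) (- 1/2 - \<i> * complex_of_real \<nu>) * f x"

lemma pointwise_scale:
  assumes inv: "\<forall>g\<in>stabG bpt. \<forall>x\<in>hypX. f (g x) = f x"
    and xi: "\<xi> \<in> coneC" and nz: "snd (snd \<xi>) \<noteq> 0"
  defines "l \<equiv> (fst \<xi> - fst (snd \<xi>)) / \<bar>snd (snd \<xi>)\<bar>"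
  shows "hfun sg f \<nu> \<xi> (Psi t a) / complex_of_real (2 * \<bar>a\<bar>) =
     complex_of_real \<bar>snd (snd \<xi>)\<bar> powr (- 1/2 - \<i> * complex_of_real \<nu>) *
     (l *\<^sub>R (hfun sg f \<nu> (1, 0, sgn (snd (snd \<xi>))) (Psi t (l * a)) / complex_of_real (2 * \<bar>l * a\<bar>)))"
proof (cases "a = 0")
  case True then show ?thesis by simp
next
  case a: False
  let ?z = "- 1/2 - \<i> * complex_of_real \<nu>"
  let ?q = "\<bar>snd (snd \<xi>)\<bar>"
  have l0: "l > 0" unfolding l_def using cone_facts(1)[OF xi nz] nz by simp
  have q0: "?q > 0" using nz by simp
  have fe: "f (Psi t (l * a)) = f (Psi t a)"
    using inv boost_stab[OF l0] Psi_hyp[OF a] boost_Psi[OF l0 a] by metis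
  have pe: "powpm sg (lbr (Psi t a) \<xi>) ?z = complex_of_real ?q powr ?z * powpm sg (lbr (Psi t (l * a)) (1, 0, sgn (snd (snd \<xi>)))) ?z"
    unfolding lbr_Psi_scale[OF xi nz a, of t, folded l_def] by (rule powpm_hom[OF q0])
  have "hfun sg f \<nu> \<xi> (Psi t a) = complex_of_real ?q powr ?z * hfun sg f \<nu> (1, 0, sgn (snd (snd \<xi>))) (Psi t (l * a))"
    unfolding hfun_def pe fe by (simp add: mult_ac)
  moreover have "complex_of_real (2 * \<bar>a\<bar>) = complex_of_real (2 * \<bar>l * a\<bar>) / complex_of_real l"
    using l0 by (simp add: abs_mult)
  ultimately show ?thesis using l0 by (simp add: scaleR_conv_of_real)
qed

lemma slice_eq:
  assumes inv: "\<forall>g\<in>stabG bpt. \<forall>x\<in>hypX. f (g x) = f x"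
    and xi: "\<xi> \<in> coneC" and nz: "snd (snd \<xi>) \<noteq> 0" and c: "t\<^sup>2 - 1 \<noteq> 0"
    and i1: "\<And>e. e \<in> {1,-1} \<Longrightarrow> (\<lambda>x. hfun sg f \<nu> \<xi> (chartX e (x,t)) / complex_of_real (2 * sqrt (x\<^sup>2 + t\<^sup>2 - 1)))
                 absolutely_integrable_on {x. x\<^sup>2 + (t\<^sup>2 - 1) > 0}"
    and i2: "\<And>e. e \<in> {1,-1} \<Longrightarrow> (\<lambda>x. hfun sg f \<nu> (1, 0, sgn (snd (snd \<xi>))) (chartX e (x,t)) / complex_of_real (2 * sqrt (x\<^sup>2 + t\<^sup>2 - 1)))
                 absolutely_integrable_on {x. x\<^sup>2 + (t\<^sup>2 - 1) > 0}"
  shows "(\<Sum>e\<in>{1,-1::real}. integral {x. x\<^sup>2 + (t\<^sup>2 - 1) > 0} (\<lambda>x. hfun sg f \<nu> \<xi> (chartX e (x,t)) / complex_of_real (2 * sqrt (x\<^sup>2 + t\<^sup>2 - 1))))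
       = complex_of_real \<bar>snd (snd \<xi>)\<bar> powr (- 1/2 - \<i> * complex_of_real \<nu>) *
         (\<Sum>e\<in>{1,-1::real}. integral {x. x\<^sup>2 + (t\<^sup>2 - 1) > 0} (\<lambda>x. hfun sg f \<nu> (1, 0, sgn (snd (snd \<xi>))) (chartX e (x,t)) / complex_of_real (2 * sqrt (x\<^sup>2 + t\<^sup>2 - 1))))"
proof -
  define l where "l = (fst \<xi> - fst (snd \<xi>)) / \<bar>snd (snd \<xi>)\<bar>"
  define C where "C = complex_of_real \<bar>snd (snd \<xi>)\<bar> powr (- 1/2 - \<i> * complex_of_real \<nu>)"
  let ?z = "(1::real, 0::real, sgn (snd (snd \<xi>)))"
  let ?Fx = "\<lambda>a. hfun sg f \<nu> \<xi> (Psi t a) / complex_of_real (2 * \<bar>a\<bar>)"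
  let ?Fz = "\<lambda>a. hfun sg f \<nu> ?z (Psi t a) / complex_of_real (2 * \<bar>a\<bar>)"
  have l0: "l > 0" unfolding l_def using cone_facts(1)[OF xi nz] nz by simp
  note T1 = slice_total[where H = "hfun sg f \<nu> \<xi>", OF c i1]
  note T2 = slice_total[where H = "hfun sg f \<nu> ?z", OF c i2]
  have h1: "((\<lambda>a. l *\<^sub>R ?Fz (l * a)) has_integral integral UNIV ?Fz) UNIV"
    using T2 l0 by (intro scale_int) auto
  have h2: "((\<lambda>a. C * (l *\<^sub>R ?Fz (l * a))) has_integral C * integral UNIV ?Fz) UNIV"
    by (rule has_integral_mult_right[OF h1])
  have fe: "?Fx = (\<lambda>a. C * (l *\<^sub>R ?Fz (l * a)))"
    unfolding C_def l_def by (rule ext) (rule pointwise_scale[OF inv xi nz])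
  have "integral UNIV ?Fx = C * integral UNIV ?Fz"
    unfolding fe by (rule integral_unique[OF h2])
  then show ?thesis using T1 T2 unfolding C_def by simp
qed

lemma chartR_slice: "indicator chartR (x, t) = (indicator {x. x\<^sup>2 + (t\<^sup>2 - 1) > 0} x :: real)"
  unfolding chartR_def by (simp add: indicator_def algebra_simps)

lemma fubini_slices:
  fixes \<phi> :: "real \<times> real \<Rightarrow> complex"
  assumes int: "set_integrable lborel chartR \<phi>"
  shows "AE t in lborel. set_integrable lborel {x. x\<^sup>2 + (t\<^sup>2 - 1) > 0} (\<lambda>x. \<phi> (x, t))"
    and "integrable lborel (\<lambda>t. LINT x : {x. x\<^sup>2 + (t\<^sup>2 - 1) > 0} | lborel. \<phi> (x, t))"
    and "set_lebesgue_integral lborel chartR \<phi> = (\<integral>t. (LINT x : {x. x\<^sup>2 + (t\<^sup>2 - 1) > 0} | lborel. \<phi> (x, t)) \<partial>lborel)"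
proof -
  let ?g = "\<lambda>x t. indicator chartR (x, t) *\<^sub>R \<phi> (x, t)"
  have i0: "integrable lborel (\<lambda>p. indicator chartR p *\<^sub>R \<phi> p)"
    using int unfolding set_integrable_def .
  have eq: "case_prod ?g = (\<lambda>p. indicator chartR p *\<^sub>R \<phi> p)" by auto
  have i1: "integrable (lborel \<Otimes>\<^sub>M lborel) (case_prod ?g)"
    unfolding eq lborel_prod using i0 .
  have g: "?g x t = indicator {x. x\<^sup>2 + (t\<^sup>2 - 1) > 0} x *\<^sub>R \<phi> (x, t)" for x t
    by (simp add: chartR_slice)
  show "AE t in lborel. set_integrable lborel {x. x\<^sup>2 + (t\<^sup>2 - 1) > 0} (\<lambda>x. \<phi> (x, t))"
    using lborel_pair.AE_integrable_snd[OF i1] unfolding set_integrable_def g .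
  show "integrable lborel (\<lambda>t. LINT x : {x. x\<^sup>2 + (t\<^sup>2 - 1) > 0} | lborel. \<phi> (x, t))"
    using lborel_pair.integrable_snd[OF i1] unfolding set_lebesgue_integral_def g .
  have "(\<integral>t. (\<integral>x. ?g x t \<partial>lborel) \<partial>lborel) = integral\<^sup>L (lborel \<Otimes>\<^sub>M lborel) (case_prod ?g)"
    by (rule lborel_pair.integral_snd[OF i1])
  show "set_lebesgue_integral lborel chartR \<phi> = (\<integral>t. (LINT x : {x. x\<^sup>2 + (t\<^sup>2 - 1) > 0} | lborel. \<phi> (x, t)) \<partial>lborel)"
  proof -
    have "set_lebesgue_integral lborel chartR \<phi> = integral\<^sup>L (lborel \<Otimes>\<^sub>M lborel) (case_prod ?g)"
      unfolding set_lebesgue_integral_def eq lborel_prod ..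
    also note \<open>(\<integral>t. (\<integral>x. ?g x t \<partial>lborel) \<partial>lborel) = integral\<^sup>L (lborel \<Otimes>\<^sub>M lborel) (case_prod ?g)\<close>[symmetric]
    finally show ?thesis unfolding set_lebesgue_integral_def g .
  qed
qed

lemma lborel_to_abs:
  fixes g :: "real \<Rightarrow> complex"
  assumes "set_integrable lborel S g"
  shows "g absolutely_integrable_on S" "(LINT x : S | lborel. g x) = integral S g"
proof -
  have i: "integrable lborel (\<lambda>x. indicator S x *\<^sub>R g x)" using assms unfolding set_integrable_def .
  then have "integrable lebesgue (\<lambda>x. indicator S x *\<^sub>R g x)"
    using integrable_completion[of "\<lambda>x. indicator S x *\<^sub>R g x" lborel] borel_measurable_integrable[OF i] by simp
  then show "g absolutely_integrable_on S" unfolding set_integrable_def .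
  show "(LINT x : S | lborel. g x) = integral S g" by (rule set_borel_integral_eq_integral(2)[OF assms])
qed

lemma FHint_eq:
  "FH_integrand sg f \<nu> \<xi> e (x, t) = hfun sg f \<nu> \<xi> (chartX e (x, t)) / complex_of_real (2 * sqrt (x\<^sup>2 + t\<^sup>2 - 1))"
  unfolding FH_integrand_def hfun_def by simp

lemma FH_fubini:
  assumes d: "FH_defined sg f \<nu> \<xi>"
  shows "FH sg f \<nu> \<xi> = (\<integral>t. (\<Sum>e\<in>{1,-1::real}. LINT x : {x. x\<^sup>2 + (t\<^sup>2 - 1) > 0} | lborel. FH_integrand sg f \<nu> \<xi> e (x, t)) \<partial>lborel)"
    and "integrable lborel (\<lambda>t. (\<Sum>e\<in>{1,-1::real}. LINT x : {x. x\<^sup>2 + (t\<^sup>2 - 1) > 0} | lborel. FH_integrand sg f \<nu> \<xi> e (x, t)))"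
proof -
  have si: "set_integrable lborel chartR (FH_integrand sg f \<nu> \<xi> e)" if "e \<in> {1,-1}" for e
    using d that unfolding FH_defined_def by blast
  have "FH sg f \<nu> \<xi> = (\<Sum>e\<in>{1,-1::real}. (\<integral>t. (LINT x : {x. x\<^sup>2 + (t\<^sup>2 - 1) > 0} | lborel. FH_integrand sg f \<nu> \<xi> e (x, t)) \<partial>lborel))"
    unfolding FH_def by (rule sum.cong[OF refl]) (rule fubini_slices(3)[OF si])
  also have "\<dots> = (\<integral>t. (\<Sum>e\<in>{1,-1::real}. LINT x : {x. x\<^sup>2 + (t\<^sup>2 - 1) > 0} | lborel. FH_integrand sg f \<nu> \<xi> e (x, t)) \<partial>lborel)"
    by (rule Bochner_Integration.integral_sum[where I="{1,-1::real}" and M=lborel and f="\<lambda>e t. LINT x : {x. x\<^sup>2 + (t\<^sup>2 - 1) > 0} | lborel. FH_integrand sg f \<nu> \<xi> e (x, t)", symmetric])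
       (rule fubini_slices(2)[OF si])
  finally show "FH sg f \<nu> \<xi> = (\<integral>t. (\<Sum>e\<in>{1,-1::real}. LINT x : {x. x\<^sup>2 + (t\<^sup>2 - 1) > 0} | lborel. FH_integrand sg f \<nu> \<xi> e (x, t)) \<partial>lborel)" .
  show "integrable lborel (\<lambda>t. (\<Sum>e\<in>{1,-1::real}. LINT x : {x. x\<^sup>2 + (t\<^sup>2 - 1) > 0} | lborel. FH_integrand sg f \<nu> \<xi> e (x, t)))"
    by (rule Bochner_Integration.integrable_sum[where I="{1,-1::real}" and M=lborel and f="\<lambda>e t. LINT x : {x. x\<^sup>2 + (t\<^sup>2 - 1) > 0} | lborel. FH_integrand sg f \<nu> \<xi> e (x, t)"])
       (rule fubini_slices(2)[OF si])
qed

lemma main_eq: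
  assumes inv: "\<forall>g\<in>stabG bpt. \<forall>x\<in>hypX. f (g x) = f x"
    and defd: "\<forall>\<xi>\<in>coneC. FH_defined sg f \<nu> \<xi>"
    and xi: "\<xi> \<in> coneC" and nz: "snd (snd \<xi>) \<noteq> 0"
  shows "FH sg f \<nu> \<xi> = complex_of_real \<bar>snd (snd \<xi>)\<bar> powr (- 1/2 - \<i> * complex_of_real \<nu>) *
            FH sg f \<nu> (1, 0, sgn (snd (snd \<xi>)))"
proof -
  let ?z = "(1::real, 0::real, sgn (snd (snd \<xi>)))"
  define C where "C = complex_of_real \<bar>snd (snd \<xi>)\<bar> powr (- 1/2 - \<i> * complex_of_real \<nu>)"
  have zc: "?z \<in> coneC" unfolding coneC_def lbr_def using nz by (auto simp: sgn_if zero_prod_def)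
  have dx: "FH_defined sg f \<nu> \<xi>" using defd xi by blast
  have dz: "FH_defined sg f \<nu> ?z" using defd zc by blast
  let ?T = "\<lambda>t. {x::real. x\<^sup>2 + (t\<^sup>2 - 1) > 0}"
  let ?Sx = "\<lambda>t. (\<Sum>e\<in>{1,-1::real}. LINT x : ?T t | lborel. FH_integrand sg f \<nu> \<xi> e (x, t))"
  let ?Sz = "\<lambda>t. (\<Sum>e\<in>{1,-1::real}. LINT x : ?T t | lborel. FH_integrand sg f \<nu> ?z e (x, t))"
  have six: "set_integrable lborel chartR (FH_integrand sg f \<nu> \<xi> e)" if "e \<in> {1,-1}" for e
    using dx that unfolding FH_defined_def by blast
  have siz: "set_integrable lborel chartR (FH_integrand sg f \<nu> ?z e)" if "e \<in> {1,-1}" for e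
    using dz that unfolding FH_defined_def by blast
  have e1: "(1::real) \<in> {1,-1}" and e2: "(-1::real) \<in> {1,-1}" by auto
  have AE: "AE t in lborel. ?Sx t = C * ?Sz t"
    using fubini_slices(1)[OF six[OF e1]] fubini_slices(1)[OF six[OF e2]]
          fubini_slices(1)[OF siz[OF e1]] fubini_slices(1)[OF siz[OF e2]]
          AE_lborel_singleton[of "1::real"] AE_lborel_singleton[of "-1::real"]
  proof eventually_elim
    case (elim t)
    have c: "t\<^sup>2 - 1 \<noteq> 0" using elim(5,6) by (auto simp: power2_eq_1_iff)
    have ix: "set_integrable lborel (?T t) (\<lambda>x. FH_integrand sg f \<nu> \<xi> e (x, t))" if "e \<in> {1,-1}" for e
      using that elim(1,2) by auto
    have iz: "set_integrable lborel (?T t) (\<lambda>x. FH_integrand sg f \<nu> ?z e (x, t))" if "e \<in> {1,-1}" for e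
      using that elim(3,4) by auto
    have "?Sx t = (\<Sum>e\<in>{1,-1::real}. integral (?T t) (\<lambda>x. hfun sg f \<nu> \<xi> (chartX e (x,t)) / complex_of_real (2 * sqrt (x\<^sup>2 + t\<^sup>2 - 1))))"
    proof (rule sum.cong[OF refl])
      fix e :: real assume "e \<in> {1,-1}"
      have "(LINT x : ?T t | lborel. FH_integrand sg f \<nu> \<xi> e (x, t)) = integral (?T t) (\<lambda>x. FH_integrand sg f \<nu> \<xi> e (x, t))"
        by (rule lborel_to_abs(2)[OF ix[OF \<open>e \<in> {1,-1}\<close>]])
      then show "(LINT x : ?T t | lborel. FH_integrand sg f \<nu> \<xi> e (x, t)) = integral (?T t) (\<lambda>x. hfun sg f \<nu> \<xi> (chartX e (x,t)) / complex_of_real (2 * sqrt (x\<^sup>2 + t\<^sup>2 - 1)))" by (simp only: FHint_eq)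
    qed
    also have "\<dots> = C * (\<Sum>e\<in>{1,-1::real}. integral (?T t) (\<lambda>x. hfun sg f \<nu> ?z (chartX e (x,t)) / complex_of_real (2 * sqrt (x\<^sup>2 + t\<^sup>2 - 1))))"
      unfolding C_def
    proof (rule slice_eq[OF inv xi nz c])
      fix e :: real assume "e \<in> {1,-1}"
      from lborel_to_abs(1)[OF ix[OF this]]
      show "(\<lambda>x. hfun sg f \<nu> \<xi> (chartX e (x,t)) / complex_of_real (2 * sqrt (x\<^sup>2 + t\<^sup>2 - 1)))
                 absolutely_integrable_on ?T t" by (simp only: FHint_eq)
    next
      fix e :: real assume "e \<in> {1,-1}"
      from lborel_to_abs(1)[OF iz[OF this]]
      show "(\<lambda>x. hfun sg f \<nu> ?z (chartX e (x,t)) / complex_of_real (2 * sqrt (x\<^sup>2 + t\<^sup>2 - 1)))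
                 absolutely_integrable_on ?T t" by (simp only: FHint_eq)
    qed
    also have "(\<Sum>e\<in>{1,-1::real}. integral (?T t) (\<lambda>x. hfun sg f \<nu> ?z (chartX e (x,t)) / complex_of_real (2 * sqrt (x\<^sup>2 + t\<^sup>2 - 1)))) = ?Sz t"
    proof (rule sum.cong[OF refl])
      fix e :: real assume "e \<in> {1,-1}"
      have "(LINT x : ?T t | lborel. FH_integrand sg f \<nu> ?z e (x, t)) = integral (?T t) (\<lambda>x. FH_integrand sg f \<nu> ?z e (x, t))"
        by (rule lborel_to_abs(2)[OF iz[OF \<open>e \<in> {1,-1}\<close>]])
      then show "integral (?T t) (\<lambda>x. hfun sg f \<nu> ?z (chartX e (x,t)) / complex_of_real (2 * sqrt (x\<^sup>2 + t\<^sup>2 - 1))) = (LINT x : ?T t | lborel. FH_integrand sg f \<nu> ?z e (x, t))" by (simp only: FHint_eq)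
    qed
    finally show ?case .
  qed
  have "FH sg f \<nu> \<xi> = (\<integral>t. ?Sx t \<partial>lborel)" by (rule FH_fubini(1)[OF dx])
  also have "\<dots> = (\<integral>t. C * ?Sz t \<partial>lborel)"
  proof (rule integral_cong_AE)
    show "?Sx \<in> borel_measurable lborel" using FH_fubini(2)[OF dx] by (rule borel_measurable_integrable)
    show "(\<lambda>t. C * ?Sz t) \<in> borel_measurable lborel"
      using FH_fubini(2)[OF dz] by (intro borel_measurable_integrable integrable_mult_right)
  qed (rule AE)
  also have "\<dots> = C * (\<integral>t. ?Sz t \<partial>lborel)"
    using FH_fubini(2)[OF dz] by simp
  also have "(\<integral>t. ?Sz t \<partial>lborel) = FH sg f \<nu> ?z" by (rule FH_fubini(1)[OF dz, symmetric])
  finally show ?thesis unfolding C_def .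
qed

lemma lbr_bpt: "lbr \<xi> bpt = - snd (snd \<xi>)"
  by (cases \<xi>) (auto simp: lbr_def bpt_def)

theorem proposition14:
  fixes f :: "pt3 \<Rightarrow> complex" and sg \<nu> :: real
  assumes sg: "sg \<in> {1, -1}"
    and inv: "\<forall>g\<in>stabG bpt. \<forall>x\<in>hypX. f (g x) = f x"
    and defd: "\<forall>\<xi>\<in>coneC. FH_defined sg f \<nu> \<xi>"
  shows "\<forall>\<xi>\<in>coneC. lbr \<xi> bpt \<noteq> 0 \<longrightarrow>
    FH sg f \<nu> \<xi> =
      complex_of_real \<bar>lbr \<xi> bpt\<bar> powr (- 1/2 - \<i> * complex_of_real \<nu>) *
      (complex_of_real (heav (lbr \<xi> bpt)) * FH sg f \<nu> (1, 0, -1)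
       + complex_of_real (heav (- lbr \<xi> bpt)) * FH sg f \<nu> (1, 0, 1))"
proof (intro ballI impI)
  fix \<xi> assume xi: "\<xi> \<in> coneC" and l: "lbr \<xi> bpt \<noteq> 0"
  have nz: "snd (snd \<xi>) \<noteq> 0" using l by (simp add: lbr_bpt)
  note M = main_eq[OF inv defd xi nz]
  show "FH sg f \<nu> \<xi> =
      complex_of_real \<bar>lbr \<xi> bpt\<bar> powr (- 1/2 - \<i> * complex_of_real \<nu>) *
      (complex_of_real (heav (lbr \<xi> bpt)) * FH sg f \<nu> (1, 0, -1)
       + complex_of_real (heav (- lbr \<xi> bpt)) * FH sg f \<nu> (1, 0, 1))"
  proof (cases "snd (snd \<xi>) > 0")
    case True
    then show ?thesis using M by (simp add: lbr_bpt heav_def)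
  next
    case False
    then have "snd (snd \<xi>) < 0" using nz by simp
    then show ?thesis using M by (simp add: lbr_bpt heav_def)
  qed
qed

end
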